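(* Let $f$ be a function as described in the context and $\rho>0$. For $z,\beta\in[0,1]$ let $h(z,\beta)\coloneqq\beta f\left(\frac{z}{\beta}\right)+(1-\beta)f\left(\frac{1-z}{1-\beta}\right)$, and for $d\in\mathbb{N}_+$ and $\beta_1,\dots,\beta_d\in[0,1]$ define $$g_{f,\rho}(\beta_1,\dots,\beta_d)\coloneqq\inf\left\{z\in[0,1]:\inf_{\lambda_1,\dots,\lambda_d\ge0,\ \sum_i\lambda_i=1}h\left(z,\sum_{i=1}^d\lambda_i\beta_i\right)\le\rho\right\}$$ (for $d=1$ this is $g_{f,\rho}(\beta)=\inf\{z\in[0,1]:h(z,\beta)\le\rho\}$). Then for any $d\in\mathbb{N}_+$ and $\beta_1,\dots,\beta_d\in[0,1]$, $$g_{f,\rho}(\beta_1,\dots,\beta_d)=g_{f,\rho}\left(\min_{1\le i\le d}\beta_i\right).$$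
   Context: $f:\mathbb{R}\to\mathbb{R}\cup\{+\infty\}$ is a closed convex function with $f(1)=0$ and $f(t)=+\infty$ for $t<0$. *)

theory Defs
  imports "HOL-Analysis.Analysis" "HOL-Library.Extended_Real"
begin

text \<open>f : R -> R \<union> {+\<infinity>} is modelled as a function real \<Rightarrow> ereal never taking -\<infinity>.
 Closed convex = epigraph is closed and convex.\<close>

definition epi :: "(real \<Rightarrow> ereal) \<Rightarrow> (real \<times> real) set" where
  "epi f = {(x, y). f x \<le> ereal y}"

definition admissible_f :: "(real \<Rightarrow> ereal) \<Rightarrow> bool" where
  "admissible_f f \<longleftrightarrow> (\<forall>x. f x \<noteq> -\<infinity>) \<and> convex (epi f) \<and> closed (epi f)
     \<and> f 1 = 0 \<and> (\<forall>t<0. f t = \<infinity>)"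

definition f_slope_inf :: "(real \<Rightarrow> ereal) \<Rightarrow> ereal" where
  "f_slope_inf f = Lim at_top (\<lambda>t. f t / ereal t)"

text \<open>Perspective b * f(a/b) with the usual f-divergence conventions
  0 f(0/0) = 0 and 0 f(a/0) = a f'(\<infinity>) for a > 0.\<close>
definition persp :: "(real \<Rightarrow> ereal) \<Rightarrow> real \<Rightarrow> real \<Rightarrow> ereal" where
  "persp f a b = (if b > 0 then ereal b * f (a / b)
                  else if a = 0 then 0 else ereal a * f_slope_inf f)"

definition hfun :: "(real \<Rightarrow> ereal) \<Rightarrow> real \<Rightarrow> real \<Rightarrow> ereal" where
  "hfun f z \<beta> = persp f z \<beta> + persp f (1 - z) (1 - \<beta>)"

text \<open>g_{f,\<rho>}(\<beta>_0,...,\<beta>_{d-1}); infimum taken in the extended reals.\<close>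
definition gfun :: "(real \<Rightarrow> ereal) \<Rightarrow> real \<Rightarrow> nat \<Rightarrow> (nat \<Rightarrow> real) \<Rightarrow> ereal" where
  "gfun f \<rho> d \<beta> = Inf (ereal ` {z \<in> {0..1}.
      (INF w \<in> {w. (\<forall>i<d. w i \<ge> 0) \<and> (\<Sum>i<d. w i) = 1}.
          hfun f z (\<Sum>i<d. w i * \<beta> i)) \<le> ereal \<rho>})"

end

theory Submission imports Defs "HOL-Real_Asymp.Real_Asymp" begin

lemma adm_nm: "admissible_f f \<Longrightarrow> f x \<noteq> -\<infinity>"
  unfolding admissible_f_def by auto

lemma conv:
  assumes adm: "admissible_f f" and a: "a \<ge> 0" and b: "b \<ge> 0" and ab: "a + b = c" and c: "c > 0"
    and w: "a * x + b * y = c * w"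
  shows "ereal c * f w \<le> ereal a * f x + ereal b * f y"
proof -
  have nm: "\<And>t. f t \<noteq> -\<infinity>" using adm_nm[OF adm] .
  consider "a = 0" | "b = 0" | "a > 0" "b > 0" using a b by linarith
  then show ?thesis
  proof cases
    case 1
    then have "w = y" "c = b" using ab w c by auto
    then show ?thesis using 1 by (simp add: zero_ereal_def[symmetric])
  next
    case 2
    then have "w = x" "c = a" using ab w c by auto
    then show ?thesis using 2 by (simp add: zero_ereal_def[symmetric])
  next
    case 3
    show ?thesis
    proof (cases "f x = \<infinity> \<or> f y = \<infinity>")
      case True
      have "ereal a * f x \<noteq> -\<infinity>" using 3 nm[of x] by (cases "f x"; simp)
      moreover have "ereal b * f y \<noteq> -\<infinity>" using 3 nm[of y] by (cases "f y"; simp)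
      ultimately
      have eq: "ereal a * f x + ereal b * f y = \<infinity>" using True 3 by auto
      show ?thesis unfolding eq by simp
    next
      case False
      then obtain p q where p: "f x = ereal p" and q: "f y = ereal q" using nm
        by (metis ereal_cases)
      have "(x, p) \<in> epi f" "(y, q) \<in> epi f" using p q unfolding epi_def by auto
      moreover have cv: "convex (epi f)" using adm unfolding admissible_f_def by auto
      ultimately have "(a/c) *\<^sub>R (x, p) + (b/c) *\<^sub>R (y, q) \<in> epi f"
        using 3 c ab by (intro convexD) (auto simp: add_divide_distrib[symmetric])
      moreover have "a/c * x + b/c * y = w" using w c by (simp add: field_simps)
      ultimately have "f w \<le> ereal (a/c * p + b/c * q)" unfolding epi_def by auto
      then have "ereal c * f w \<le> ereal c * ereal (a/c * p + b/c * q)"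
        using c by (intro ereal_mult_left_mono) auto
      also have "\<dots> = ereal a * f x + ereal b * f y" using c p q by (simp add: field_simps)
      finally show ?thesis .
    qed
  qed
qed

lemma slope_mono:
  assumes adm: "admissible_f f" and s: "1 < s" "s \<le> s'"
  shows "f s * ereal (1/(s-1)) \<le> f s' * ereal (1/(s'-1))"
proof (cases "s = s'")
  case False
  then have ss: "s < s'" using s by auto
  have f1: "f 1 = 0" using adm unfolding admissible_f_def by auto
  have "ereal (s'-1) * f s \<le> ereal (s'-s) * f 1 + ereal (s-1) * f s'"
    using ss s by (intro conv[OF adm]) (auto simp: algebra_simps)
  also have "\<dots> = ereal (s-1) * f s'" using f1 by simp
  finally have *: "ereal (s'-1) * f s \<le> ereal (s-1) * f s'" .
  have "ereal (1/((s-1)*(s'-1))) * (ereal (s'-1) * f s) \<le> ereal (1/((s-1)*(s'-1))) * (ereal (s-1) * f s')"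
    using s ss by (intro ereal_mult_left_mono[OF *]) auto
  moreover have "ereal (1/((s-1)*(s'-1))) * (ereal (s'-1) * f s) = f s * ereal (1/(s-1))"
  proof -
    have "ereal (1/((s-1)*(s'-1))) * (ereal (s'-1) * f s) = ereal (1/((s-1)*(s'-1)) * (s'-1)) * f s"
      by (simp add: mult.assoc[symmetric])
    also have "1/((s-1)*(s'-1)) * (s'-1) = 1/(s-1)" using ss s by (simp add: divide_simps)
    finally show ?thesis by (simp add: mult.commute)
  qed
  moreover have "ereal (1/((s-1)*(s'-1))) * (ereal (s-1) * f s') = f s' * ereal (1/(s'-1))"
  proof -
    have "ereal (1/((s-1)*(s'-1))) * (ereal (s-1) * f s') = ereal (1/((s-1)*(s'-1)) * (s-1)) * f s'"
      by (simp add: mult.assoc[symmetric])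
    also have "1/((s-1)*(s'-1)) * (s-1) = 1/(s'-1)" using ss s by (simp add: divide_simps)
    finally show ?thesis by (simp add: mult.commute)
  qed
  ultimately show ?thesis by simp
qed simp

lemma slope_le_L:
  assumes adm: "admissible_f f" and s: "1 < s"
  shows "f s * ereal (1/(s-1)) \<le> f_slope_inf f"
proof -
  define \<phi> where "\<phi> t = f t * ereal (1/(t-1))" for t
  define S where "S = (SUP t\<in>{1<..}. \<phi> t)"
  have lim1: "(\<phi> \<longlongrightarrow> S) at_top"
  proof (rule order_tendstoI)
    fix y assume "y < S"
    then obtain t0 where t0: "t0 \<in> {1<..}" "y < \<phi> t0" unfolding S_def by (auto simp: less_SUP_iff)
    show "eventually (\<lambda>t. y < \<phi> t) at_top"
      using eventually_ge_at_top[of t0]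
    proof eventually_elim
      case (elim t)
      then show ?case using t0 slope_mono[OF adm, of t0 t] unfolding \<phi>_def by auto
    qed
  next
    fix y assume "S < y"
    show "eventually (\<lambda>t. \<phi> t < y) at_top"
      using eventually_gt_at_top[of 1]
    proof eventually_elim
      case (elim t)
      then have "\<phi> t \<le> S" unfolding S_def by (intro SUP_upper) auto
      then show ?case using \<open>S < y\<close> by auto
    qed
  qed
  have lim2: "((\<lambda>t. ereal ((t-1)/t)) \<longlongrightarrow> ereal 1) at_top"
    by (intro tendsto_ereal) real_asymp
  have "((\<lambda>t. \<phi> t * ereal ((t-1)/t)) \<longlongrightarrow> S * ereal 1) at_top"
    by (rule tendsto_mult_ereal[OF lim1 lim2]) auto
  then have lim3: "((\<lambda>t. \<phi> t * ereal ((t-1)/t)) \<longlongrightarrow> S) at_top" by simp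
  have "eventually (\<lambda>t. \<phi> t * ereal ((t-1)/t) = f t / ereal t) at_top"
    using eventually_gt_at_top[of 1]
  proof eventually_elim
    case (elim t)
    have "\<phi> t * ereal ((t-1)/t) = f t * ereal (1/(t-1) * ((t-1)/t))"
      unfolding \<phi>_def by (simp add: mult.assoc)
    also have "1/(t-1) * ((t-1)/t) = 1/t" using elim by (simp add: field_simps)
    also have "f t * ereal (1/t) = f t / ereal t" using elim
      by (simp add: divide_ereal_def inverse_eq_divide)
    finally show ?case .
  qed
  then have "((\<lambda>t. f t / ereal t) \<longlongrightarrow> S) at_top"
    using lim3 tendsto_cong by fastforce
  then have "f_slope_inf f = S" unfolding f_slope_inf_def by (intro tendsto_Lim) auto
  moreover have "\<phi> s \<le> S" unfolding S_def using s by (intro SUP_upper) auto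
  ultimately show ?thesis unfolding \<phi>_def by simp
qed

lemma K1:
  assumes adm: "admissible_f f" and t: "t \<ge> 1"
  shows "f t \<le> ereal (t-1) * f_slope_inf f"
proof (cases "t = 1")
  case True
  then show ?thesis using adm unfolding admissible_f_def by (simp add: zero_ereal_def[symmetric])
next
  case False
  then have t1: "t > 1" using t by auto
  have "f t = ereal (t-1) * (f t * ereal (1/(t-1)))"
  proof -
    have "ereal (t-1) * (f t * ereal (1/(t-1))) = ereal ((t-1) * (1/(t-1))) * f t"
      by (simp add: mult_ac)
    also have "(t-1) * (1/(t-1)) = 1" using t1 by simp
    finally show ?thesis by simp
  qed
  also have "\<dots> \<le> ereal (t-1) * f_slope_inf f"
    using t1 by (intro ereal_mult_left_mono slope_le_L[OF adm]) auto
  finally show ?thesis .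
qed

lemma scale_le:
  fixes H :: ereal
  assumes "0 \<le> H" "0 \<le> v" "v \<le> 1"
  shows "ereal v * H \<le> H"
  using assms by (cases H) (auto simp: mult_left_le_one_le)

lemma Nneg:
  assumes adm: "admissible_f f" and z: "z < 1"
  shows "0 \<le> f z + ereal (1-z) * f_slope_inf f"
proof -
  have nm: "\<And>t. f t \<noteq> -\<infinity>" using adm_nm[OF adm] .
  have f1: "f 1 = 0" using adm unfolding admissible_f_def by auto
  have L2: "f 2 \<le> f_slope_inf f" using slope_le_L[OF adm, of 2] by simp
  then have Lnm: "f_slope_inf f \<noteq> -\<infinity>" using nm[of 2] by auto
  have Lm: "ereal (1-z) * f_slope_inf f \<noteq> -\<infinity>" using z Lnm
    by (cases "f_slope_inf f") auto
  show ?thesis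
  proof (cases "f z")
    case (real p)
    show ?thesis
    proof (cases "f 2")
      case (real q)
      have "ereal (2-z) * f 1 \<le> ereal 1 * f z + ereal (1-z) * f 2"
        using z by (intro conv[OF adm]) (auto simp: algebra_simps)
      then have "0 \<le> p + (1-z) * q" using f1 \<open>f z = ereal p\<close> real by simp
      moreover have "ereal (1-z) * f 2 \<le> ereal (1-z) * f_slope_inf f"
        using z L2 by (intro ereal_mult_left_mono) auto
      then have "ereal ((1-z) * q) \<le> ereal (1-z) * f_slope_inf f" using real by simp
      then have "ereal p + ereal ((1-z) * q) \<le> f z + ereal (1-z) * f_slope_inf f"
        unfolding \<open>f z = ereal p\<close> by (rule add_left_mono)
      ultimately show ?thesis by (metis ereal_less_eq(5) order_trans plus_ereal.simps(1) zero_ereal_def)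
    next
      case PInf
      then have "f_slope_inf f = \<infinity>" using L2 by simp
      then show ?thesis using z \<open>f z = ereal p\<close> by simp
    next
      case MInf
      then show ?thesis using nm by simp
    qed
  next
    case PInf
    then show ?thesis using Lm by simp
  next
    case MInf
    then show ?thesis using nm by simp
  qed
qed

lemma h_inner:
  assumes "0 < b" "b < 1"
  shows "hfun f z b = ereal b * f (z/b) + ereal (1-b) * f ((1-z)/(1-b))"
  using assms unfolding hfun_def persp_def by auto

lemma h_nonneg:
  assumes adm: "admissible_f f" and b: "0 < b" "b < 1"
  shows "0 \<le> hfun f z b"
proof -
  have f1: "f 1 = 0" using adm unfolding admissible_f_def by auto
  have "ereal 1 * f 1 \<le> ereal b * f (z/b) + ereal (1-b) * f ((1-z)/(1-b))"
    using b by (intro conv[OF adm]) (auto simp: field_simps)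
  then show ?thesis using f1 h_inner[OF b] by simp
qed

lemma h_diag:
  assumes adm: "admissible_f f" and m: "0 \<le> m" "m \<le> 1"
  shows "hfun f m m = 0"
  using adm m unfolding admissible_f_def hfun_def persp_def by auto

lemma h_mono:
  assumes adm: "admissible_f f" and zm: "0 \<le> z" "z < m" "m \<le> b" "b \<le> 1"
  shows "hfun f z m \<le> hfun f z b"
proof (cases "m = b")
  case False
  then have mb: "m < b" using zm by auto
  have f1: "f 1 = 0" using adm unfolding admissible_f_def by auto
  have m01: "0 < m" "m < 1" using zm mb by auto
  define \<nu> where "\<nu> = (m-z)/(b-z)"
  define \<mu> where "\<mu> = (b-m)/(b-z)"
  have bz: "b - z > 0" using zm mb by auto
  have nu01: "0 \<le> \<nu>" "\<nu> \<le> 1" using zm mb bz unfolding \<nu>_def by (auto simp: field_simps)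
  have mu0: "0 \<le> \<mu>" using mb bz unfolding \<mu>_def by auto
  have "\<mu> + \<nu> = ((b-m) + (m-z))/(b-z)" unfolding \<mu>_def \<nu>_def by (rule add_divide_distrib[symmetric])
  then have mn: "\<mu> + \<nu> = 1" using bz by simp
  have e: "(b-m)*z + (m-z)*b = m*(b-z)" by algebra
  have "\<mu>*z + \<nu>*b = ((b-m)*z + (m-z)*b)/(b-z)" unfolding \<mu>_def \<nu>_def
    by (simp add: add_divide_distrib)
  also have "\<dots> = m" unfolding e using bz by simp
  finally have comb: "\<mu>*z + \<nu>*b = m" .
  show ?thesis
  proof (cases "b < 1")
    case True
    have t1: "ereal m * f (z/m) \<le> ereal (\<mu>*z) * f 1 + ereal (\<nu>*b) * f (z/b)"
    proof (rule conv[OF adm])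
      have "\<nu>*b*(z/b) = \<nu>*z" using m01 mb by simp
      moreover have "\<mu>*z + \<nu>*z = z" using mn by (metis distrib_right mult_1)
      ultimately show "\<mu>*z*1 + \<nu>*b*(z/b) = m*(z/m)" using m01 by simp
    qed (use mu0 nu01 zm m01 mb comb in auto)
    have t2: "ereal (1-m) * f ((1-z)/(1-m)) \<le> ereal (\<mu>*(1-z)) * f 1 + ereal (\<nu>*(1-b)) * f ((1-z)/(1-b))"
    proof (rule conv[OF adm])
      show "\<mu>*(1-z) + \<nu>*(1-b) = 1-m" using mn comb by (simp add: algebra_simps)
      have "\<nu>*(1-b)*((1-z)/(1-b)) = \<nu>*(1-z)" using True by simp
      moreover have "\<mu>*(1-z) + \<nu>*(1-z) = 1-z" using mn by (metis distrib_right mult_1)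
      ultimately show "\<mu>*(1-z)*1 + \<nu>*(1-b)*((1-z)/(1-b)) = (1-m)*((1-z)/(1-m))" using m01 by simp
    qed (use mu0 nu01 zm m01 mb True in auto)
    have "hfun f z m \<le> ereal (\<nu>*b) * f (z/b) + ereal (\<nu>*(1-b)) * f ((1-z)/(1-b))"
      using add_mono[OF t1 t2] f1 h_inner[OF m01] by simp
    also have "\<dots> = ereal \<nu> * hfun f z b"
    proof -
      have hb: "hfun f z b = ereal b * f (z/b) + ereal (1-b) * f ((1-z)/(1-b))"
        using m01 mb True by (intro h_inner) auto
      have n1: "ereal b * f (z/b) \<noteq> -\<infinity>" using m01 mb adm_nm[OF adm, of "z/b"]
        by (cases "f (z/b)") auto
      have n2: "ereal (1-b) * f ((1-z)/(1-b)) \<noteq> -\<infinity>" using True adm_nm[OF adm, of "(1-z)/(1-b)"]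
        by (cases "f ((1-z)/(1-b))") auto
      have "ereal \<nu> * hfun f z b = ereal \<nu> * (ereal b * f (z/b)) + ereal \<nu> * (ereal (1-b) * f ((1-z)/(1-b)))"
        unfolding hb using n1 n2 by (intro ereal_distrib_left) auto
      then show ?thesis by (simp add: mult.assoc[symmetric])
    qed
    also have "\<dots> \<le> hfun f z b"
      using nu01 h_nonneg[OF adm, of b z] m01 mb True by (intro scale_le) auto
    finally show ?thesis .
  next
    case False
    then have b1: "b = 1" using zm by auto
    have z1: "z < 1" using zm m01 by auto
    have hb: "hfun f z b = f z + ereal (1-z) * f_slope_inf f"
      using b1 z1 unfolding hfun_def persp_def by simp
    have nu: "\<nu> = (m-z)/(1-z)" "\<mu> = (1-m)/(1-z)" unfolding \<nu>_def \<mu>_def b1 by auto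
    have t1: "ereal m * f (z/m) \<le> ereal (\<mu>*z) * f 1 + ereal \<nu> * f z"
    proof (rule conv[OF adm])
      show "\<mu>*z + \<nu> = m" using comb b1 by simp
      have "\<mu>*z + \<nu>*z = z" using mn by (metis distrib_right mult_1)
      then show "\<mu>*z*1 + \<nu>*z = m*(z/m)" using m01 by simp
    qed (use mu0 nu01 zm m01 in auto)
    have "ereal (1-m) * f ((1-z)/(1-m)) \<le> ereal (1-m) * (ereal ((1-z)/(1-m) - 1) * f_slope_inf f)"
      using m01 zm by (intro ereal_mult_left_mono K1[OF adm]) (auto simp: field_simps)
    also have "\<dots> = ereal (\<nu> * (1-z)) * f_slope_inf f"
    proof -
      have "(1-m) * ((1-z)/(1-m) - 1) = \<nu> * (1-z)" using m01 z1 unfolding nu by (simp add: field_simps)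
      then show ?thesis by (simp add: mult.assoc[symmetric])
    qed
    finally have t2: "ereal (1-m) * f ((1-z)/(1-m)) \<le> ereal (\<nu> * (1-z)) * f_slope_inf f" .
    have "hfun f z m \<le> ereal \<nu> * f z + ereal (\<nu> * (1-z)) * f_slope_inf f"
      using add_mono[OF t1 t2] f1 h_inner[OF m01] by simp
    also have "\<dots> = ereal \<nu> * hfun f z b"
    proof -
      have "ereal (1-z) * f_slope_inf f \<noteq> -\<infinity>"
      proof -
        have "f 2 \<le> f_slope_inf f" using slope_le_L[OF adm, of 2] by simp
        then have "f_slope_inf f \<noteq> -\<infinity>" using adm_nm[OF adm, of 2] by auto
        then show ?thesis using z1 by (cases "f_slope_inf f") auto
      qed
      then have "ereal \<nu> * hfun f z b = ereal \<nu> * f z + ereal \<nu> * (ereal (1-z) * f_slope_inf f)"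
        unfolding hb using adm_nm[OF adm]
        by (intro ereal_distrib_left) auto
      then show ?thesis by (simp add: mult.assoc[symmetric])
    qed
    also have "\<dots> \<le> hfun f z b"
      using nu01 Nneg[OF adm z1] hb by (intro scale_le) auto
    finally show ?thesis .
  qed
qed simp

theorem lemma17:
  fixes f :: "real \<Rightarrow> ereal" and \<rho> :: real and d :: nat and \<beta> :: "nat \<Rightarrow> real"
  assumes "admissible_f f" and "\<rho> > 0" and "d \<ge> 1"
    and "\<forall>i<d. \<beta> i \<in> {0..1}"
  shows "gfun f \<rho> d \<beta> = gfun f \<rho> 1 (\<lambda>_. Min (\<beta> ` {..<d}))"
proof -
  note adm = assms(1)
  define m where "m = Min (\<beta> ` {..<d})"
  define W where "W = {w. (\<forall>i<d. w i \<ge> 0) \<and> (\<Sum>i<d. w i) = (1::real)}"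
  define A where "A = {z \<in> {0..1::real}. (INF w \<in> W. hfun f z (\<Sum>i<d. w i * \<beta> i)) \<le> ereal \<rho>}"
  define B where "B = {z \<in> {0..1::real}. hfun f z m \<le> ereal \<rho>}"
  have "0 \<in> {..<d}" using assms(3) by auto
  then have ne: "\<beta> ` {..<d} \<noteq> {}" by blast
  obtain i0 where i0: "i0 < d" "\<beta> i0 = m"
    using Min_in[OF _ ne] unfolding m_def by auto
  have m01: "0 \<le> m" "m \<le> 1" using i0 assms(4) by auto
  have mle: "\<And>i. i < d \<Longrightarrow> m \<le> \<beta> i" unfolding m_def by auto
  have rng: "m \<le> (\<Sum>i<d. w i * \<beta> i) \<and> (\<Sum>i<d. w i * \<beta> i) \<le> 1" if "w \<in> W" for w
  proof -
    have "(\<Sum>i<d. w i * m) \<le> (\<Sum>i<d. w i * \<beta> i)"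
      using that mle unfolding W_def by (intro sum_mono mult_left_mono) auto
    moreover have "(\<Sum>i<d. w i * \<beta> i) \<le> (\<Sum>i<d. w i * 1)"
      using that assms(4) unfolding W_def by (intro sum_mono mult_left_mono) auto
    moreover have "(\<Sum>i<d. w i * m) = m" "(\<Sum>i<d. w i * 1) = 1"
      using that unfolding W_def by (auto simp: sum_distrib_right[symmetric])
    ultimately show ?thesis by simp
  qed
  define w0 where "w0 = (\<lambda>i. if i = i0 then 1 else (0::real))"
  have w0W: "w0 \<in> W" using i0 unfolding W_def w0_def by auto
  have "(\<Sum>i<d. w0 i * \<beta> i) = (\<Sum>i<d. if i = i0 then \<beta> i else 0)"
    by (intro sum.cong) (auto simp: w0_def)
  then have w0s: "(\<Sum>i<d. w0 i * \<beta> i) = m" using i0 by simp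
  have l1: "{..<(1::nat)} = {0}" by auto
  have rhs: "gfun f \<rho> 1 (\<lambda>_. m) = Inf (ereal ` B)"
  proof -
    have "(INF w \<in> {w. (\<forall>i<(1::nat). w i \<ge> 0) \<and> (\<Sum>i<1. w i) = (1::real)}.
          hfun f z (\<Sum>i<1. w i * m)) = hfun f z m" for z
    proof (rule antisym)
      show "(INF w \<in> {w. (\<forall>i<(1::nat). w i \<ge> 0) \<and> (\<Sum>i<1. w i) = (1::real)}.
          hfun f z (\<Sum>i<1. w i * m)) \<le> hfun f z m"
        by (rule INF_lower2[of "\<lambda>_. 1"]) (simp_all add: One_nat_def)
      show "hfun f z m \<le> (INF w \<in> {w. (\<forall>i<(1::nat). w i \<ge> 0) \<and> (\<Sum>i<1. w i) = (1::real)}.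
          hfun f z (\<Sum>i<1. w i * m))"
        by (rule INF_greatest) (simp add: One_nat_def)
    qed
    then show ?thesis unfolding gfun_def B_def by simp
  qed
  have lhs: "gfun f \<rho> d \<beta> = Inf (ereal ` A)" unfolding gfun_def A_def W_def by simp
  have BA: "B \<subseteq> A"
  proof
    fix z assume "z \<in> B"
    then show "z \<in> A" unfolding A_def B_def
      using INF_lower[OF w0W, of "\<lambda>w. hfun f z (\<Sum>i<d. w i * \<beta> i)"] w0s by auto
  qed
  have mB: "m \<in> B" unfolding B_def using h_diag[OF adm m01] m01 assms(2) by auto
  have "Inf (ereal ` B) \<le> Inf (ereal ` A)"
  proof (rule Inf_greatest)
    fix y assume "y \<in> ereal ` A"
    then obtain z where z: "z \<in> A" "y = ereal z" by auto
    show "Inf (ereal ` B) \<le> y"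
    proof (cases "m \<le> z")
      case True
      have "Inf (ereal ` B) \<le> ereal m" using mB by (intro Inf_lower) auto
      then show ?thesis using True z by (simp add: order_trans)
    next
      case False
      have "hfun f z m \<le> (INF w \<in> W. hfun f z (\<Sum>i<d. w i * \<beta> i))"
      proof (rule INF_greatest)
        fix w assume "w \<in> W"
        then show "hfun f z m \<le> hfun f z (\<Sum>i<d. w i * \<beta> i)"
          using rng[of w] False z(1) unfolding A_def by (intro h_mono[OF adm]) auto
      qed
      then have "z \<in> B" using z(1) unfolding A_def B_def by auto
      then show ?thesis using z by (intro Inf_lower) auto
    qed
  qed
  moreover have "Inf (ereal ` A) \<le> Inf (ereal ` B)" using BA by (intro Inf_superset_mono) auto
  ultimately show ?thesis unfolding lhs m_def[symmetric] rhs by simp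
qed

end
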